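(* Fix a treatment group $d$, a post-treatment target age $a$, and a control group $d'$ with $d'>a\ge d$. Suppose the No Anticipation assumption holds for both genders $g\in\{f,m\}$ and both groups $d$ and $d'$, and suppose $$\frac{\gamma_{\mathrm{PT}}(f,d,d',a)}{APO(f,d,\infty,a)}=\frac{\gamma_{\mathrm{PT}}(m,d,d',a)}{APO(m,d,\infty,a)}.$$ Then the effect of parenthood on the gender earnings ratio satisfies $$\Delta\rho(d,a)=\frac{\mathbb{E}[Y_a\mid G=f,D=d]}{\mathbb{E}[Y_a\mid G=m,D=d]}-\frac{\delta_{\mathrm{APO}}(f,d,d',a)}{\delta_{\mathrm{APO}}(m,d,d',a)}.$$
   Context: Population of individuals with gender $G\in\{f,m\}$ and age at first childbirth $D$ (with $D=\infty$ meaning never). For each age $a$ and each (possibly counterfactual) first-birth age $d'\in\mathbb{N}\cup\{\infty\}$ there is a potential outcome (earnings) $Y_a(d')$; observed earnings satisfy consistency $Y_a=Y_a(D)$. Define $APO(g,d,d',a)=\mathbb{E}[Y_a(d')\mid G=g,D=d]$. Define $\rho(d,d',a)=APO(f,d,d',a)/APO(m,d,d',a)$ and $\Delta\rho(d,a)=\rho(d,d,a)-\rho(d,\infty,a)$. Define $\delta_{\mathrm{APO}}(g,d,d',a)=\mathbb{E}[Y_{d-1}\mid G=g,D=d]+\mathbb{E}[Y_a-Y_{d-1}\mid G=g,D=d']$ and $\gamma_{\mathrm{PT}}(g,d,d',a)=APO(g,d,\infty,a)-APO(g,d,\infty,d-1)-[APO(g,d',\infty,a)-APO(g,d',\infty,d-1)]$.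 No Anticipation for gender $g$ and group $d$: $APO(g,d,d,b)=APO(g,d,\infty,b)$ for every age $b<d$. All denominators appearing are assumed nonzero. *)

theory Defs
  imports "HOL-Probability.Probability" "HOL-Library.Extended_Nat"
begin

datatype gender = Female | Male

text \<open>Population cell {G = g, D = d} (first-birth age d; \<infinity> = never).\<close>
definition cell :: "'s measure \<Rightarrow> ('s \<Rightarrow> gender) \<Rightarrow> ('s \<Rightarrow> enat) \<Rightarrow> gender \<Rightarrow> enat \<Rightarrow> 's set" where
  "cell M G D g d = {x \<in> space M. G x = g \<and> D x = d}"

definition cexp :: "'s measure \<Rightarrow> 's set \<Rightarrow> ('s \<Rightarrow> real) \<Rightarrow> real" where
  "cexp M A X = (LINT x:A|M. X x) / measure M A"

text \<open>Potential outcomes Y a d' x; APO(g,d,d',a) = E[Y_a(d') | G=g, D=d].\<close>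
definition APO :: "'s measure \<Rightarrow> ('s \<Rightarrow> gender) \<Rightarrow> ('s \<Rightarrow> enat) \<Rightarrow> (nat \<Rightarrow> enat \<Rightarrow> 's \<Rightarrow> real)
    \<Rightarrow> gender \<Rightarrow> enat \<Rightarrow> enat \<Rightarrow> nat \<Rightarrow> real" where
  "APO M G D Y g d d' a = cexp M (cell M G D g d) (Y a d')"

definition rho where
  "rho M G D Y d d' a = APO M G D Y Female d d' a / APO M G D Y Male d d' a"

definition Delta_rho where
  "Delta_rho M G D Y d a = rho M G D Y d d a - rho M G D Y d \<infinity> a"

definition delta_APO :: "'s measure \<Rightarrow> ('s \<Rightarrow> gender) \<Rightarrow> ('s \<Rightarrow> enat) \<Rightarrow> (nat \<Rightarrow> 's \<Rightarrow> real)
    \<Rightarrow> gender \<Rightarrow> nat \<Rightarrow> nat \<Rightarrow> nat \<Rightarrow> real" where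
  "delta_APO M G D Yobs g d d' a =
     cexp M (cell M G D g (enat d)) (Yobs (d - 1))
     + cexp M (cell M G D g (enat d')) (\<lambda>x. Yobs a x - Yobs (d - 1) x)"

definition gamma_PT :: "'s measure \<Rightarrow> ('s \<Rightarrow> gender) \<Rightarrow> ('s \<Rightarrow> enat) \<Rightarrow> (nat \<Rightarrow> enat \<Rightarrow> 's \<Rightarrow> real)
    \<Rightarrow> gender \<Rightarrow> nat \<Rightarrow> nat \<Rightarrow> nat \<Rightarrow> real" where
  "gamma_PT M G D Y g d d' a =
     APO M G D Y g (enat d) \<infinity> a - APO M G D Y g (enat d) \<infinity> (d - 1)
     - (APO M G D Y g (enat d') \<infinity> a - APO M G D Y g (enat d') \<infinity> (d - 1))"

definition no_anticipation :: "'s measure \<Rightarrow> ('s \<Rightarrow> gender) \<Rightarrow> ('s \<Rightarrow> enat) \<Rightarrow> (nat \<Rightarrow> enat \<Rightarrow> 's \<Rightarrow> real)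
    \<Rightarrow> gender \<Rightarrow> nat \<Rightarrow> bool" where
  "no_anticipation M G D Y g d \<longleftrightarrow>
     (\<forall>b < d. APO M G D Y g (enat d) (enat d) b = APO M G D Y g (enat d) \<infinity> b)"

end

theory Submission
  imports Defs
begin

theorem theorem2:
  fixes M :: "'s measure" and G :: "'s \<Rightarrow> gender" and D :: "'s \<Rightarrow> enat"
    and Y :: "nat \<Rightarrow> enat \<Rightarrow> 's \<Rightarrow> real" and Yobs :: "nat \<Rightarrow> 's \<Rightarrow> real"
    and d d' a :: nat
  assumes "prob_space M"
    and meas_cells: "\<And>g e. cell M G D g e \<in> sets M"
    and integ: "\<And>b e. integrable M (Y b e)"
    and consistency: "\<And>b x. x \<in> space M \<Longrightarrow> Yobs b x = Y b (D x) x"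
    and d_pos: "1 \<le> d"
    and ages: "d \<le> a" "a < d'"
    and pos_cells: "\<And>g. measure M (cell M G D g (enat d)) \<noteq> 0"
                   "\<And>g. measure M (cell M G D g (enat d')) \<noteq> 0"
    and NA: "\<And>g. no_anticipation M G D Y g d" "\<And>g. no_anticipation M G D Y g d'"
    and nz: "APO M G D Y Female (enat d) \<infinity> a \<noteq> 0" "APO M G D Y Male (enat d) \<infinity> a \<noteq> 0"
            "APO M G D Y Male (enat d) (enat d) a \<noteq> 0"
            "cexp M (cell M G D Male (enat d)) (Yobs a) \<noteq> 0"
            "delta_APO M G D Yobs Male d d' a \<noteq> 0"
    and ratio: "gamma_PT M G D Y Female d d' a / APO M G D Y Female (enat d) \<infinity> a
              = gamma_PT M G D Y Male d d' a / APO M G D Y Male (enat d) \<infinity> a"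
  shows "Delta_rho M G D Y (enat d) a =
           cexp M (cell M G D Female (enat d)) (Yobs a) / cexp M (cell M G D Male (enat d)) (Yobs a)
           - delta_APO M G D Yobs Female d d' a / delta_APO M G D Yobs Male d d' a"
proof -
  have obs: "cexp M (cell M G D g e) (Yobs b) = APO M G D Y g e e b" for g e b
    unfolding APO_def cexp_def
    by (rule arg_cong[where f="\<lambda>t. t / _"], rule set_lebesgue_integral_cong)
       (simp_all add: meas_cells, simp add: cell_def consistency)
  have si: "set_integrable M (cell M G D g e) (Y b e')" for g e b e'
    unfolding set_integrable_def
    by (rule integrable_mult_indicator[OF meas_cells integ])
  have obsd: "cexp M (cell M G D g e) (\<lambda>x. Yobs b x - Yobs c x) = APO M G D Y g e e b - APO M G D Y g e e c" for g e b c
  proof -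
    have "(LINT x:cell M G D g e|M. Yobs b x - Yobs c x) = (LINT x:cell M G D g e|M. Y b e x - Y c e x)"
      by (rule set_lebesgue_integral_cong) (simp_all add: meas_cells, simp add: cell_def consistency)
    also have "... = (LINT x:cell M G D g e|M. Y b e x) - (LINT x:cell M G D g e|M. Y c e x)"
      by (rule set_integral_diff(2)[OF si si])
    finally show ?thesis unfolding APO_def cexp_def by (simp add: diff_divide_distrib)
  qed
  have na1: "APO M G D Y g (enat d) (enat d) (d-1) = APO M G D Y g (enat d) \<infinity> (d-1)" for g
    using NA(1)[of g] d_pos unfolding no_anticipation_def by auto
  have na2: "APO M G D Y g (enat d') (enat d') b = APO M G D Y g (enat d') \<infinity> b" if "b < d'" for g b
    using NA(2)[of g] that unfolding no_anticipation_def by auto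
  have del: "delta_APO M G D Yobs g d d' a = APO M G D Y g (enat d) \<infinity> a - gamma_PT M G D Y g d d' a" for g
    unfolding delta_APO_def gamma_PT_def obs obsd na1
    using na2[of a g] na2[of "d-1" g] ages by simp
  define k where "k = gamma_PT M G D Y Male d d' a / APO M G D Y Male (enat d) \<infinity> a"
  have gf: "gamma_PT M G D Y Female d d' a = k * APO M G D Y Female (enat d) \<infinity> a"
    using ratio nz(1) unfolding k_def by (simp add: field_simps)
  have gm: "gamma_PT M G D Y Male d d' a = k * APO M G D Y Male (enat d) \<infinity> a"
    using nz(2) unfolding k_def by (simp add: field_simps)
  have k1: "1 - k \<noteq> 0"
    using nz(5) unfolding del gm by auto
  have "delta_APO M G D Yobs Female d d' a / delta_APO M G D Yobs Male d d' a
       = APO M G D Y Female (enat d) \<infinity> a / APO M G D Y Male (enat d) \<infinity> a"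
  proof -
    have "APO M G D Y Female (enat d) \<infinity> a - k * APO M G D Y Female (enat d) \<infinity> a = (1 - k) * APO M G D Y Female (enat d) \<infinity> a"
      "APO M G D Y Male (enat d) \<infinity> a - k * APO M G D Y Male (enat d) \<infinity> a = (1 - k) * APO M G D Y Male (enat d) \<infinity> a"
      by (simp_all add: algebra_simps)
    then show ?thesis unfolding del gf gm using k1 by simp
  qed
  then show ?thesis
    unfolding Delta_rho_def rho_def obs by simp
qed

end
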